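(* Let $\Pi$ be an affine PTS with affine invariant $I$, and suppose that the process started at $(\ell_{\mathrm{init}},\mathbf v_{\mathrm{init}})$ terminates almost surely (reaches $\{\ell_t,\ell_f\}$ with probability $1$), where $\ell_{\mathrm{init}}\notin\{\ell_t,\ell_f\}$. Suppose that for every location $\ell\notin\{\ell_t,\ell_f\}$ we are given $\mathbf a_\ell\in\mathbb R^V$, $b_\ell\in\mathbb R$, and set $\mathbf a_{\ell_f}=\mathbf 0$, $b_{\ell_f}=0$, such that: (i) there is $M\in\mathbb R$ with $\mathbf a_\ell\cdot\mathbf v+b_\ell\le M$ for every non-terminal $\ell$ and every $\mathbf v\in I(\ell)$; and (ii) for every transition $\tau=\langle\ell^{\mathrm{src}},\varphi,F_1,\dots,F_k\rangle$ with forks $F_j=\langle\ell^{\mathrm{dst}}_j,p_j,\mathrm{upd}_j\rangle$, $\mathrm{upd}_j(\mathbf v,\mathbf u)=\mathbf Q_j\mathbf v+\mathbf R_j\mathbf u+\mathbf e_j$, letting $J_\tau=\{j:\ell^{\mathrm{dst}}_j\ne\ell_t\}$ and $Q_\tau=\sum_{j\in J_\tau}p_j$, we have $Q_\tau>0$ and, for every $\mathbf v\in I(\ell^{\mathrm{src}})$ with $\mathbf v\models\varphi$, $$Q_\tau^{-1}\sum_{j\in J_\tau}p_j\Big(\mathbf a_{\ell^{\mathrm{dst}}_j}\cdot(\mathbf Q_j\mathbf v+\mathbf R_j\boldsymbol\mu+\mathbf e_j)+b_{\ell^{\mathrm{dst}}_j}-\mathbf a_{\ell^{\mathrm{src}}}\cdot\mathbf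 v-b_{\ell^{\mathrm{src}}}\Big)\ge-\ln Q_\tau,$$ where $\boldsymbol\mu=\mathbb E[\mathbf r]$. Then the function $\theta$ with $\theta(\ell_t,\cdot)=0$, $\theta(\ell_f,\cdot)=1$, $\theta(\ell,\mathbf v)=\exp(\mathbf a_\ell\cdot\mathbf v+b_\ell)$ otherwise is a bounded post fixed point on reachable states, and $\mathrm{vpf}(\ell_{\mathrm{init}},\mathbf v_{\mathrm{init}})\ge\exp(\mathbf a_{\ell_{\mathrm{init}}}\cdot\mathbf v_{\mathrm{init}}+b_{\ell_{\mathrm{init}}})$.
   Context: A probabilistic transition system (PTS) $\Pi$ consists of: a finite set $V$ of program variables (valuations $\mathbf v\in\mathbb R^V$); a finite set $R$ of sampling variables, each $r\in R$ with a probability distribution $\mathcal D(r)$ on $\mathbb R$ with finite mean; $\mathbf r$ denotes the random vector with independent coordinates $\mathbf r[r]\sim\mathcal D(r)$, and $\mathcal U\subseteq\mathbb R^R$ a set with $\Pr[\mathbf r\in\mathcal U]=1$; a finite set $L$ of locations containing an initial location $\ell_{\mathrm{init}}$ and two distinct terminal locations $\ell_t$ (normal termination) and $\ell_f$ (assertion violation); an initial valuation $\mathbf v_{\mathrm{init}}$; and a finite set of transitions $\tau=\langle\ell^{\mathrm{src}},\varphi,F_1,\dots,F_k\rangle$, $\ell^{\mathrm{src}}$ non-terminal, guard $\varphi$, forks $F_j=\langle\ell^{\mathrm{dst}}_j,p_j,\mathrm{upd}_j\rangle$ with $p_j>0$, $\sum_jp_j=1$. For each non-terminal $\ell$ and $\mathbf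 v$ exactly one transition has $\ell^{\mathrm{src}}=\ell$ and $\mathbf v\models\varphi$ (the enabled one). The process: from the current state $(\ell,\mathbf v)$ with $\ell$ non-terminal, take the enabled transition, choose fork $j$ with probability $p_j$, draw a fresh independent copy $\mathbf u$ of $\mathbf r$, move to $(\ell^{\mathrm{dst}}_j,\mathrm{upd}_j(\mathbf v,\mathbf u))$; terminal locations are absorbing. $\mathrm{vpf}(\ell,\mathbf v)$ is the probability of ever reaching $\ell_f$ from $(\ell,\mathbf v)$. $\Pi$ is affine if every guard is a conjunction of affine inequalities in the program variables and every update has the form $\mathrm{upd}(\mathbf v,\mathbf u)=\mathbf Q\mathbf v+\mathbf R\mathbf u+\mathbf e$ with constant matrices $\mathbf Q,\mathbf R$ and constant vector $\mathbf e$. $\mathrm{Reach}$ is the smallest set of states containing $(\ell_{\mathrm{init}},\mathbf v_{\mathrm{init}})$ and closed under taking successors $(\ell^{\mathrm{dst}}_j,\mathrm{upd}_j(\mathbf v,\mathbf u))$ with $\mathbf u\in\mathcal U$ along enabled transitions. An invariant $I$ maps each location $\ell$ to $I(\ell)\subseteq\mathbb R^V$ with $\mathbf v\in I(\ell)$ whenever $(\ell,\mathbf v)\in\mathrm{Reach}$; it is affine if each $I(\ell)$ is a conjunction of affine inequalities. $\mathsf{ptf}$ maps $f$ (with $f(\ell_t,\cdot)=0$, $f(\ell_f,\cdot)=1$) to $\mathsf{ptf}(f)(\ell_f,\mathbf v)=1$, $\mathsf{ptf}(f)(\ell_t,\mathbf v)=0$, and for non-terminal $\ell$, $\mathsf{ptf}(f)(\ell,\mathbf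 v)=\sum_jp_j\mathbb E_{\mathbf r}[f(\ell^{\mathrm{dst}}_j,\mathrm{upd}_j(\mathbf v,\mathbf r))]$ for the enabled transition; a post fixed point on reachable states is $f$ with $f(\sigma)\le\mathsf{ptf}(f)(\sigma)$ for all $\sigma\in\mathrm{Reach}$. *)

theory Defs
  imports "HOL-Probability.Probability"
begin

text \<open>Program variables are indexed by a
finite type 'v (valuations are functions 'v => real), sampling variables by a
finite type 'r, locations by a finite type 'l.  Updates of an affine PTS are given
directly by their matrices Q, R and vector e.\<close>

datatype ('l, 'v, 'r) fork =
  Fork (dst: 'l) (fprob: real) (Qm: "'v \<Rightarrow> 'v \<Rightarrow> real") (Rm: "'v \<Rightarrow> 'r \<Rightarrow> real") (ev: "'v \<Rightarrow> real")

datatype ('l, 'v, 'r) transition =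
  Trans (src: 'l) (guard: "('v \<Rightarrow> real) set") (forks: "('l, 'v, 'r) fork list")

record ('l, 'v, 'r) pts =
  loc_t :: 'l
  loc_f :: 'l
  loc_init :: 'l
  val_init :: "'v \<Rightarrow> real"
  trans :: "('l, 'v, 'r) transition set"
  dist :: "'r \<Rightarrow> real measure"
  supp :: "('r \<Rightarrow> real) set"

definition dotp :: "('v::finite \<Rightarrow> real) \<Rightarrow> ('v \<Rightarrow> real) \<Rightarrow> real" where
  "dotp a v = (\<Sum>i\<in>UNIV. a i * v i)"

definition upd :: "('l, 'v::finite, 'r::finite) fork \<Rightarrow> ('v \<Rightarrow> real) \<Rightarrow> ('r \<Rightarrow> real) \<Rightarrow> ('v \<Rightarrow> real)" where
  "upd F v u = (\<lambda>i. (\<Sum>j\<in>UNIV. Qm F i j * v j) + (\<Sum>k\<in>UNIV. Rm F i k * u k) + ev F i)"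

definition affine_conj :: "('v::finite \<Rightarrow> real) set \<Rightarrow> bool" where
  "affine_conj S \<longleftrightarrow> (\<exists>cs :: (('v \<Rightarrow> real) \<times> real \<times> bool) list.
      S = {v. \<forall>(c, d, strict) \<in> set cs. if strict then dotp c v < d else dotp c v \<le> d})"

definition sample_measure :: "('l, 'v, 'r::finite) pts \<Rightarrow> ('r \<Rightarrow> real) measure" where
  "sample_measure P = PiM UNIV (dist P)"

definition dist_mean :: "('l, 'v, 'r) pts \<Rightarrow> ('r \<Rightarrow> real)" where
  "dist_mean P = (\<lambda>k. \<integral>x. x \<partial>(dist P k))"

definition is_pts :: "('l::finite, 'v::finite, 'r::finite) pts \<Rightarrow> bool" where
  "is_pts P \<longleftrightarrow>
     loc_t P \<noteq> loc_f P \<and> finite (trans P) \<and>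
     (\<forall>k. prob_space (dist P k) \<and> sets (dist P k) = sets borel \<and> integrable (dist P k) (\<lambda>x. x)) \<and>
     supp P \<in> sets (sample_measure P) \<and> emeasure (sample_measure P) (supp P) = 1 \<and>
     (\<forall>\<tau>\<in>trans P. src \<tau> \<notin> {loc_t P, loc_f P} \<and>
        (\<forall>F\<in>set (forks \<tau>). fprob F > 0) \<and> sum_list (map fprob (forks \<tau>)) = 1) \<and>
     (\<forall>l v. l \<notin> {loc_t P, loc_f P} \<longrightarrow> (\<exists>!\<tau>. \<tau> \<in> trans P \<and> src \<tau> = l \<and> v \<in> guard \<tau>))"

definition affine_pts :: "('l::finite, 'v::finite, 'r::finite) pts \<Rightarrow> bool" where
  "affine_pts P \<longleftrightarrow> is_pts P \<and> (\<forall>\<tau>\<in>trans P. affine_conj (guard \<tau>))"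

definition enabled :: "('l, 'v, 'r) pts \<Rightarrow> 'l \<Rightarrow> ('v \<Rightarrow> real) \<Rightarrow> ('l, 'v, 'r) transition" where
  "enabled P l v = (THE \<tau>. \<tau> \<in> trans P \<and> src \<tau> = l \<and> v \<in> guard \<tau>)"

definition state_space :: "('l \<times> ('v \<Rightarrow> real)) measure" where
  "state_space = count_space UNIV \<Otimes>\<^sub>M PiM UNIV (\<lambda>_. borel)"

definition fork_pmf :: "('l, 'v, 'r) fork list \<Rightarrow> nat pmf" where
  "fork_pmf Fs = pmf_of_list (map (\<lambda>j. (j, fprob (Fs ! j))) [0..<length Fs])"

definition kernel :: "('l::finite, 'v::finite, 'r::finite) pts \<Rightarrow> ('l \<times> ('v \<Rightarrow> real)) \<Rightarrow> ('l \<times> ('v \<Rightarrow> real)) measure" where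
  "kernel P \<sigma> = (case \<sigma> of (l, v) \<Rightarrow>
     if l = loc_t P \<or> l = loc_f P then return state_space (l, v)
     else (let Fs = forks (enabled P l v) in
       bind (measure_pmf (fork_pmf Fs))
         (\<lambda>j. distr (sample_measure P) state_space (\<lambda>u. (dst (Fs ! j), upd (Fs ! j) v u)))))"

fun kpow :: "('s \<Rightarrow> 's measure) \<Rightarrow> nat \<Rightarrow> 's \<Rightarrow> 's set \<Rightarrow> ennreal" where
  "kpow K 0 s A = indicator A s"
| "kpow K (Suc n) s A = (\<integral>\<^sup>+ s'. kpow K n s' A \<partial>(K s))"

text \<open>Probability of ever reaching l_f (since l_f is absorbing, this is the supremum
over n of the probability of being in l_f after n steps).\<close>
definition vpf :: "('l::finite, 'v::finite, 'r::finite) pts \<Rightarrow> ('l \<times> ('v \<Rightarrow> real)) \<Rightarrow> ennreal" where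
  "vpf P \<sigma> = (SUP n. kpow (kernel P) n \<sigma> ({loc_f P} \<times> UNIV))"

definition terminates_as :: "('l::finite, 'v::finite, 'r::finite) pts \<Rightarrow> ('l \<times> ('v \<Rightarrow> real)) \<Rightarrow> bool" where
  "terminates_as P \<sigma> \<longleftrightarrow> (SUP n. kpow (kernel P) n \<sigma> ({loc_t P, loc_f P} \<times> UNIV)) = 1"

inductive_set reach :: "('l::finite, 'v::finite, 'r::finite) pts \<Rightarrow> ('l \<times> ('v \<Rightarrow> real)) set"
  for P where
  init: "(loc_init P, val_init P) \<in> reach P"
| step: "(l, v) \<in> reach P \<Longrightarrow> l \<notin> {loc_t P, loc_f P} \<Longrightarrow> F \<in> set (forks (enabled P l v)) \<Longrightarrow>
         u \<in> supp P \<Longrightarrow> (dst F, upd F v u) \<in> reach P"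

definition is_invariant :: "('l::finite, 'v::finite, 'r::finite) pts \<Rightarrow> ('l \<Rightarrow> ('v \<Rightarrow> real) set) \<Rightarrow> bool" where
  "is_invariant P I \<longleftrightarrow> (\<forall>(l, v) \<in> reach P. v \<in> I l)"

definition affine_invariant :: "('l::finite, 'v::finite, 'r::finite) pts \<Rightarrow> ('l \<Rightarrow> ('v \<Rightarrow> real) set) \<Rightarrow> bool" where
  "affine_invariant P I \<longleftrightarrow> is_invariant P I \<and> (\<forall>l. affine_conj (I l))"

definition ptf :: "('l::finite, 'v::finite, 'r::finite) pts \<Rightarrow> ('l \<times> ('v \<Rightarrow> real) \<Rightarrow> real) \<Rightarrow> ('l \<times> ('v \<Rightarrow> real) \<Rightarrow> real)" where
  "ptf P f \<sigma> = (case \<sigma> of (l, v) \<Rightarrow>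
     if l = loc_f P then 1 else if l = loc_t P then 0
     else (\<Sum>F\<leftarrow>forks (enabled P l v). fprob F * (\<integral>u. f (dst F, upd F v u) \<partial>(sample_measure P))))"

definition post_fixed_point_on_reach :: "('l::finite, 'v::finite, 'r::finite) pts \<Rightarrow> ('l \<times> ('v \<Rightarrow> real) \<Rightarrow> real) \<Rightarrow> bool" where
  "post_fixed_point_on_reach P f \<longleftrightarrow>
     (\<forall>v. f (loc_t P, v) = 0) \<and> (\<forall>v. f (loc_f P, v) = 1) \<and> (\<forall>\<sigma>\<in>reach P. f \<sigma> \<le> ptf P f \<sigma>)"

definition theta :: "('l, 'v::finite, 'r) pts \<Rightarrow> ('l \<Rightarrow> 'v \<Rightarrow> real) \<Rightarrow> ('l \<Rightarrow> real) \<Rightarrow> ('l \<times> ('v \<Rightarrow> real) \<Rightarrow> real)" where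
  "theta P a b \<sigma> = (case \<sigma> of (l, v) \<Rightarrow>
     if l = loc_t P then 0 else if l = loc_f P then 1 else exp (dotp (a l) v + b l))"

end

theory Submission
  imports Defs
begin

abbreviation BV :: "('v::finite \<Rightarrow> real) measure" where "BV \<equiv> PiM UNIV (\<lambda>_. borel)"

lemma dotp_meas[measurable]: "(\<lambda>v. dotp c v) \<in> borel_measurable (BV::('v::finite \<Rightarrow> real) measure)"
  unfolding dotp_def by measurable

lemma space_BV[simp]: "space BV = UNIV"
  by (simp add: space_PiM)

lemma upd_meas[measurable]:
  "(\<lambda>p. upd F (fst p) (snd p)) \<in> measurable ((BV::('v::finite \<Rightarrow> real) measure) \<Otimes>\<^sub>M (BV::('r::finite \<Rightarrow> real) measure)) BV"
  unfolding upd_def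
  apply (rule measurable_PiM_single')
  by measurable

lemma upd_meas2[measurable]:
  "upd F v \<in> measurable (BV::('r::finite \<Rightarrow> real) measure) (BV::('v::finite \<Rightarrow> real) measure)"
  unfolding upd_def
  apply (rule measurable_PiM_single')
  by measurable

lemma guard_meas:
  assumes "affine_conj (S::('v::finite \<Rightarrow> real) set)" shows "S \<in> sets BV"
proof -
  obtain cs where S: "S = {v. \<forall>(c, d, strict) \<in> set cs. if strict then dotp c v < d else dotp c v \<le> d}"
    using assms unfolding affine_conj_def by blast
  have "{v. \<forall>(c, d, strict) \<in> set cs. if strict then dotp c v < d else dotp c v \<le> d} \<in> sets (BV::('v::finite \<Rightarrow> real) measure)"
  proof (induction cs)
    case Nil
    then show ?case using sets.top[of "BV::('v::finite \<Rightarrow> real) measure"] by simp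
  next
    case (Cons x cs)
    obtain c d s where x: "x = (c,d,s)" by (cases x) auto
    have e: "{v. \<forall>(c, d, strict) \<in> set (x#cs). if strict then dotp c v < d else dotp c v \<le> d}
      = {v. if s then dotp c v < d else dotp c v \<le> d} \<inter> {v. \<forall>(c, d, strict) \<in> set cs. if strict then dotp c v < d else dotp c v \<le> d}"
      using x by auto
    have "{v \<in> space BV. if s then dotp c v < d else dotp c v \<le> d} \<in> sets (BV::('v::finite \<Rightarrow> real) measure)"
      by measurable
    then have "{v. if s then dotp c v < d else dotp c v \<le> d} \<in> sets (BV::('v::finite \<Rightarrow> real) measure)"
      by simp
    then show ?case unfolding e using Cons by (intro sets.Int) auto
  qed
  then show ?thesis using S by simp
qed

lemma dotp_upd: "dotp c (upd F v u) = (\<Sum>i\<in>UNIV. c i * ((\<Sum>j\<in>UNIV. Qm F i j * v j) + ev F i)) + (\<Sum>k\<in>UNIV. (\<Sum>i\<in>UNIV. c i * Rm F i k) * u k)"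
proof -
  have "(\<Sum>k\<in>UNIV. (\<Sum>i\<in>UNIV. c i * Rm F i k) * u k) = (\<Sum>i\<in>UNIV. c i * (\<Sum>k\<in>UNIV. Rm F i k * u k))"
    by (simp add: sum_distrib_left sum_distrib_right mult.assoc) (rule sum.swap)
  then show ?thesis by (simp add: dotp_def upd_def distrib_left sum.distrib)
qed
lemma dotp_zero[simp]: "dotp (\<lambda>_. 0) x = 0" by (simp add: dotp_def)

lemma exp_tangent: "exp m * (1 + x - m) \<le> exp (x::real)"
proof -
  have "1 + (x - m) \<le> exp (x - m)" by (rule exp_ge_add_one_self)
  then have "exp m * (1 + (x - m)) \<le> exp m * exp (x - m)" by (intro mult_left_mono) auto
  also have "\<dots> = exp x" by (simp add: exp_diff)
  finally show ?thesis by (simp add: add_diff_eq)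
qed

lemma fin_jensen:
  fixes w x :: "'a \<Rightarrow> real"
  assumes "finite J" "\<And>j. j \<in> J \<Longrightarrow> w j \<ge> 0" "(\<Sum>j\<in>J. w j) > 0"
  shows "(\<Sum>j\<in>J. w j) * exp ((1 / (\<Sum>j\<in>J. w j)) * (\<Sum>j\<in>J. w j * x j)) \<le> (\<Sum>j\<in>J. w j * exp (x j))"
proof -
  define Q where "Q = (\<Sum>j\<in>J. w j)"
  define m where "m = (1 / Q) * (\<Sum>j\<in>J. w j * x j)"
  have Qp: "Q > 0" using assms(3) Q_def by simp
  have mQ: "m * Q = (\<Sum>j\<in>J. w j * x j)" unfolding m_def using Qp by simp
  have "(\<Sum>j\<in>J. w j * (exp m * (1 + x j - m))) \<le> (\<Sum>j\<in>J. w j * exp (x j))"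
    using assms(2) exp_tangent by (intro sum_mono mult_left_mono) auto
  moreover have "(\<Sum>j\<in>J. w j * (exp m * (1 + x j - m))) = exp m * (\<Sum>j\<in>J. w j * (1 + x j - m))"
    by (simp add: sum_distrib_left mult.left_commute)
  moreover have "(\<Sum>j\<in>J. w j * (1 + x j - m)) = Q + (\<Sum>j\<in>J. w j * x j) - m * Q"
    unfolding Q_def by (simp add: algebra_simps sum.distrib sum_subtractf sum_distrib_left sum_distrib_right)
  ultimately have "exp m * Q \<le> (\<Sum>j\<in>J. w j * exp (x j))" using mQ by simp
  then show ?thesis unfolding m_def Q_def by (simp add: mult.commute)
qed

context fixes P :: "('l::finite, 'v::finite, 'r::finite) pts" assumes affP: "affine_pts P"
begin

lemma isP: "is_pts P" using affP unfolding affine_pts_def by simp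

lemma guard_sets: "\<tau> \<in> trans P \<Longrightarrow> guard \<tau> \<in> sets BV"
  using affP unfolding affine_pts_def by (auto intro: guard_meas)


lemma isP_parts:
  "loc_t P \<noteq> loc_f P" "finite (trans P)"
  "\<And>k. prob_space (dist P k)" "\<And>k. sets (dist P k) = sets borel" "\<And>k. integrable (dist P k) (\<lambda>x. x)"
  "supp P \<in> sets (sample_measure P)" "emeasure (sample_measure P) (supp P) = 1"
  "\<And>\<tau>. \<tau>\<in>trans P \<Longrightarrow> src \<tau> \<notin> {loc_t P, loc_f P}"
  "\<And>\<tau> F. \<tau>\<in>trans P \<Longrightarrow> F\<in>set (forks \<tau>) \<Longrightarrow> fprob F > 0"
  "\<And>\<tau>. \<tau>\<in>trans P \<Longrightarrow> sum_list (map fprob (forks \<tau>)) = 1"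
  "\<And>l v. l \<notin> {loc_t P, loc_f P} \<Longrightarrow> (\<exists>!\<tau>. \<tau> \<in> trans P \<and> src \<tau> = l \<and> v \<in> guard \<tau>)"
  using isP unfolding is_pts_def by (elim conjE; simp)+

lemma S_prob: "prob_space (sample_measure P)"
  unfolding sample_measure_def using isP_parts by (auto intro!: prob_space_PiM)

lemma sets_S: "sets (sample_measure P) = sets (BV::('r \<Rightarrow> real) measure)"
  unfolding sample_measure_def using isP_parts by (intro sets_PiM_cong) auto

lemma space_S[simp]: "space (sample_measure P) = UNIV"
  using sets_eq_imp_space_eq[OF sets_S] by simp

lemma meas_S: "measurable (sample_measure P) N = measurable BV N"
  by (rule measurable_cong_sets[OF sets_S refl])

lemma enabled_props:
  assumes "l \<notin> {loc_t P, loc_f P}"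
  shows "enabled P l v \<in> trans P \<and> src (enabled P l v) = l \<and> v \<in> guard (enabled P l v)"
proof -
  have "\<exists>!\<tau>. \<tau> \<in> trans P \<and> src \<tau> = l \<and> v \<in> guard \<tau>" by (rule isP_parts(11)[OF assms])
  then show ?thesis unfolding enabled_def by (rule theI')
qed

lemma enabled_unique:
  assumes "l \<notin> {loc_t P, loc_f P}" "\<tau> \<in> trans P" "src \<tau> = l" "v \<in> guard \<tau>"
  shows "enabled P l v = \<tau>"
proof -
  have "\<exists>!\<tau>. \<tau> \<in> trans P \<and> src \<tau> = l \<and> v \<in> guard \<tau>" by (rule isP_parts(11)[OF assms(1)])
  then show ?thesis unfolding enabled_def using assms(2-4) by (intro the1_equality) auto
qed

lemma fork_wf:
  assumes "\<tau> \<in> trans P"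
  shows "pmf_of_list_wf (map (\<lambda>j. (j, fprob (forks \<tau> ! j))) [0..<length (forks \<tau>)])"
proof -
  have pos: "\<forall>F\<in>set (forks \<tau>). fprob F > 0" and s1: "sum_list (map fprob (forks \<tau>)) = 1"
    using isP_parts(9,10) assms by auto
  have A: "map snd (map (\<lambda>j. (j, fprob (forks \<tau> ! j))) [0..<length (forks \<tau>)]) = map fprob (forks \<tau>)"
  proof -
    have "map snd (map (\<lambda>j. (j, fprob (forks \<tau> ! j))) [0..<length (forks \<tau>)])
        = map fprob (map (\<lambda>i. forks \<tau> ! i) [0..<length (forks \<tau>)])"
      by (simp only: map_map comp_def snd_conv)
    then show ?thesis by (simp only: map_nth)
  qed
  have B: "\<forall>x\<in>set (map fprob (forks \<tau>)). x \<ge> 0"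
    using pos by (auto simp: less_imp_le)
  show ?thesis unfolding pmf_of_list_wf_def A using B s1 by (rule conjI)
qed

lemma fork_pmf_pmf:
  assumes "\<tau> \<in> trans P" "j < length (forks \<tau>)"
  shows "pmf (fork_pmf (forks \<tau>)) j = fprob (forks \<tau> ! j)"
proof -
  have u: "[0..<length (forks \<tau>)] = [0..<j] @ j # [Suc j..<length (forks \<tau>)]"
  proof -
    obtain k where k: "length (forks \<tau>) = j + k" using assms(2) le_Suc_ex less_imp_le_nat by blast
    have "[0..<j+k] = [0..<j] @ [j..<j+k]" by (rule upt_add_eq_append) simp
    also have "[j..<j+k] = j # [Suc j..<j+k]" using assms(2) k by (intro upt_conv_Cons) simp
    finally show ?thesis using k by simp
  qed
  have "filter (\<lambda>z. fst z = j) (map (\<lambda>j. (j, fprob (forks \<tau> ! j))) [0..<length (forks \<tau>)])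
     = [(j, fprob (forks \<tau> ! j))]"
    unfolding u by (simp add: filter_map comp_def filter_empty_conv)
  then show ?thesis unfolding fork_pmf_def
    by (simp add: pmf_pmf_of_list[OF fork_wf[OF assms(1)]])
qed

lemma fork_pmf_set:
  assumes "\<tau> \<in> trans P"
  shows "set_pmf (fork_pmf (forks \<tau>)) \<subseteq> {..<length (forks \<tau>)}"
  using set_pmf_of_list[OF fork_wf[OF assms]] unfolding fork_pmf_def by auto


lemma phi_meas[measurable]:
  "(\<lambda>u. (dst F, upd F v u)) \<in> measurable (sample_measure P) state_space"
  unfolding meas_S state_space_def by measurable

lemma sets_SS: "sets (state_space :: ('l \<times> ('v \<Rightarrow> real)) measure) = sets (count_space UNIV \<Otimes>\<^sub>M BV)"
  unfolding state_space_def by simp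

lemma kernel_nonterm:
  assumes "l \<notin> {loc_t P, loc_f P}"
  shows "kernel P (l,v) = measure_pmf (fork_pmf (forks (enabled P l v))) \<bind>
     (\<lambda>j. distr (sample_measure P) state_space (\<lambda>u. (dst (forks (enabled P l v) ! j), upd (forks (enabled P l v) ! j) v u)))"
  using assms unfolding kernel_def by (simp add: Let_def)

lemma kernel_integral:
  assumes l: "l \<notin> {loc_t P, loc_f P}" and g[measurable]: "g \<in> borel_measurable state_space"
  shows "(\<integral>\<^sup>+s. g s \<partial>kernel P (l,v)) = (\<Sum>j<length (forks (enabled P l v)).
      ennreal (fprob (forks (enabled P l v) ! j)) *
      (\<integral>\<^sup>+u. g (dst (forks (enabled P l v) ! j), upd (forks (enabled P l v) ! j) v u) \<partial>sample_measure P))"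
proof -
  define Fs where "Fs = forks (enabled P l v)"
  have \<tau>: "enabled P l v \<in> trans P" using enabled_props[OF l] by blast
  define N where "N = (\<lambda>j. distr (sample_measure P) state_space (\<lambda>u. (dst (Fs ! j), upd (Fs ! j) v u)))"
  interpret S: prob_space "sample_measure P" by (rule S_prob)
  have Nsp: "N j \<in> space (subprob_algebra state_space)" for j
    unfolding N_def space_subprob_algebra
    by (auto intro!: prob_space_imp_subprob_space S.prob_space_distr)
  have Nm: "N \<in> measurable (measure_pmf (fork_pmf Fs)) (subprob_algebra state_space)"
    unfolding measurable_cong_sets[OF sets_measure_pmf_count_space refl] using Nsp by simp
  have "(\<integral>\<^sup>+s. g s \<partial>kernel P (l,v)) = (\<integral>\<^sup>+j. (\<integral>\<^sup>+y. g y \<partial>N j) \<partial>measure_pmf (fork_pmf Fs))"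
    unfolding kernel_nonterm[OF l] Fs_def[symmetric] N_def[symmetric]
    by (rule nn_integral_bind[OF g Nm])
  also have "\<dots> = (\<integral>\<^sup>+j. (\<integral>\<^sup>+u. g (dst (Fs ! j), upd (Fs ! j) v u) \<partial>sample_measure P) \<partial>measure_pmf (fork_pmf Fs))"
    unfolding N_def by (subst nn_integral_distr) auto
  also have "\<dots> = (\<Sum>j<length Fs. (\<integral>\<^sup>+u. g (dst (Fs ! j), upd (Fs ! j) v u) \<partial>sample_measure P) * pmf (fork_pmf Fs) j)"
    using fork_pmf_set[OF \<tau>] unfolding Fs_def by (intro nn_integral_measure_pmf_support) auto
  also have "\<dots> = (\<Sum>j<length Fs. ennreal (fprob (Fs ! j)) * (\<integral>\<^sup>+u. g (dst (Fs ! j), upd (Fs ! j) v u) \<partial>sample_measure P))"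
    using fork_pmf_pmf[OF \<tau>] unfolding Fs_def by (intro sum.cong) (auto simp: mult.commute)
  finally show ?thesis unfolding Fs_def .
qed


lemma space_SS[simp]: "space (state_space :: ('l \<times> ('v \<Rightarrow> real)) measure) = UNIV"
  by (simp add: state_space_def space_pair_measure)

lemma pairF_meas[measurable]:
  "(\<lambda>x. (dst F, upd F (fst x) (snd x))) \<in> measurable (BV \<Otimes>\<^sub>M BV) (state_space :: ('l \<times> ('v \<Rightarrow> real)) measure)"
  unfolding state_space_def by measurable

lemma pairl_meas[measurable]:
  "(\<lambda>v. (l::'l, v)) \<in> measurable BV (state_space :: ('l \<times> ('v \<Rightarrow> real)) measure)"
  unfolding state_space_def by measurable

lemma inner_meas[measurable]:
  assumes g[measurable]: "g \<in> borel_measurable state_space"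
  shows "(\<lambda>v. \<integral>\<^sup>+u. g (dst F, upd F v u) \<partial>sample_measure P) \<in> borel_measurable BV"
proof -
  interpret S: prob_space "sample_measure P" by (rule S_prob)
  have g': "g \<in> borel_measurable (count_space UNIV \<Otimes>\<^sub>M BV)" using g by (simp add: state_space_def)
  have "(\<lambda>p. g (dst F, upd F (fst p) (snd p))) \<in> borel_measurable (BV \<Otimes>\<^sub>M BV)"
    using g' by measurable
  then have "(\<lambda>p. g (dst F, upd F (fst p) (snd p))) \<in> borel_measurable (BV \<Otimes>\<^sub>M sample_measure P)"
    by (subst measurable_cong_sets[OF sets_pair_measure_cong[OF refl sets_S] refl])
  then have "case_prod (\<lambda>v u. g (dst F, upd F v u)) \<in> borel_measurable (BV \<Otimes>\<^sub>M sample_measure P)"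
    by (simp add: case_prod_beta')
  then show ?thesis by (rule S.borel_measurable_nn_integral)
qed

lemma kernel_int_meas:
  assumes g[measurable]: "g \<in> borel_measurable state_space"
  shows "(\<lambda>s. \<integral>\<^sup>+y. g y \<partial>kernel P s) \<in> borel_measurable state_space"
  unfolding measurable_cong_sets[OF sets_SS refl]
proof (rule measurable_pair_measure_countable1)
  show "countable (UNIV :: 'l set)" by simp
  fix l :: 'l
  show "(\<lambda>v. \<integral>\<^sup>+y. g y \<partial>kernel P (l, v)) \<in> borel_measurable BV"
  proof (cases "l \<in> {loc_t P, loc_f P}")
    case True
    have "(\<integral>\<^sup>+y. g y \<partial>kernel P (l, v)) = g (l, v)" for v
      using True unfolding kernel_def by (auto intro!: nn_integral_return simp: space_SS)
    moreover have "(\<lambda>v. g (l, v)) \<in> borel_measurable BV"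
      by measurable
    ultimately show ?thesis by simp
  next
    case False
    define X where "X = (\<lambda>\<tau> v. (\<Sum>j<length (forks \<tau>). ennreal (fprob (forks \<tau> ! j)) *
          (\<integral>\<^sup>+u. g (dst (forks \<tau> ! j), upd (forks \<tau> ! j) v u) \<partial>sample_measure P)) :: ennreal)"
    define h where "h = (\<lambda>v. \<Sum>\<tau>\<in>{\<tau>\<in>trans P. src \<tau> = l}. indicator (guard \<tau>) v * X \<tau> v)"
    have Xm: "X \<tau> \<in> borel_measurable BV" for \<tau>
      unfolding X_def by (intro borel_measurable_sum borel_measurable_times_ennreal borel_measurable_const inner_meas[OF g])
    have "h \<in> borel_measurable BV"
      unfolding h_def using guard_sets Xm by (intro borel_measurable_sum borel_measurable_times_ennreal borel_measurable_indicator) auto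
    moreover have "(\<integral>\<^sup>+y. g y \<partial>kernel P (l, v)) = h v" for v
    proof -
      let ?t = "enabled P l v"
      have t: "?t \<in> trans P" "src ?t = l" "v \<in> guard ?t" using enabled_props[OF False] by auto
      have ind: "indicator (guard \<tau>) v * X \<tau> v = (if \<tau> = ?t then X \<tau> v else 0)" if "\<tau> \<in> {\<tau>\<in>trans P. src \<tau> = l}" for \<tau>
      proof (cases "\<tau> = ?t")
        case True then show ?thesis using t by simp
      next
        case F: False
        have "v \<notin> guard \<tau>"
        proof
          assume "v \<in> guard \<tau>"
          then have "?t = \<tau>" using enabled_unique[OF False, of \<tau> v] that by simp
          then show False using F by simp
        qed
        then show ?thesis using F by simp
      qed
      have "h v = (\<Sum>\<tau>\<in>{\<tau>\<in>trans P. src \<tau> = l}. if \<tau> = ?t then X \<tau> v else 0)"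
        unfolding h_def by (rule sum.cong[OF refl ind])
      also have "\<dots> = X ?t v"
        using t isP_parts(2) by (subst sum.delta) auto
      finally show ?thesis using kernel_integral[OF False g] unfolding X_def by simp
    qed
    ultimately show ?thesis by simp
  qed
qed


lemma kpow_meas:
  assumes "A \<in> sets state_space"
  shows "(\<lambda>s. kpow (kernel P) n s A) \<in> borel_measurable state_space"
proof (induction n)
  case 0
  then show ?case using assms by simp
next
  case (Suc n)
  then show ?case by (simp only: kpow.simps kernel_int_meas)
qed

lemma fork_sum:
  assumes "\<tau> \<in> trans P"
  shows "(\<Sum>j<length (forks \<tau>). fprob (forks \<tau> ! j)) = 1"
proof -
  have "sum_list (map fprob (forks \<tau>)) = 1" using isP_parts(10) assms by blast
  then show ?thesis by (simp add: sum_list_sum_nth atLeast0LessThan)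
qed

lemma fork_nonneg:
  assumes "\<tau> \<in> trans P" "j < length (forks \<tau>)"
  shows "fprob (forks \<tau> ! j) > 0"
  using isP_parts(9)[OF assms(1) nth_mem[OF assms(2)]] .

lemma kernel_le1:
  assumes g: "g \<in> borel_measurable state_space" and le: "\<And>s. g s \<le> 1"
  shows "(\<integral>\<^sup>+y. g y \<partial>kernel P s) \<le> 1"
proof -
  obtain l v where s: "s = (l, v)" by (cases s)
  show ?thesis
  proof (cases "l \<in> {loc_t P, loc_f P}")
    case True
    then have "(\<integral>\<^sup>+y. g y \<partial>kernel P s) = g s"
      unfolding kernel_def s using g by (auto intro!: nn_integral_return)
    then show ?thesis using le by simp
  next
    case False
    interpret S: prob_space "sample_measure P" by (rule S_prob)
    let ?Fs = "forks (enabled P l v)"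
    have t: "enabled P l v \<in> trans P" using enabled_props[OF False] by auto
    have i1: "(\<integral>\<^sup>+u. g (dst (?Fs ! j), upd (?Fs ! j) v u) \<partial>sample_measure P) \<le> 1" for j
    proof -
      have "(\<integral>\<^sup>+u. g (dst (?Fs ! j), upd (?Fs ! j) v u) \<partial>sample_measure P) \<le> (\<integral>\<^sup>+u. 1 \<partial>sample_measure P)"
        using le by (intro nn_integral_mono) auto
      also have "\<dots> = 1" using S.emeasure_space_1 by simp
      finally show ?thesis .
    qed
    have "(\<integral>\<^sup>+y. g y \<partial>kernel P s) \<le> (\<Sum>j<length ?Fs. ennreal (fprob (?Fs ! j)) * 1)"
      unfolding s kernel_integral[OF False g] using i1 by (intro sum_mono mult_left_mono) auto
    also have "\<dots> = ennreal (\<Sum>j<length ?Fs. fprob (?Fs ! j))"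
      unfolding mult_1_right using fork_nonneg[OF t] by (intro sum_ennreal) (simp add: less_imp_le)
    also have "\<dots> = 1" using fork_sum[OF t] by simp
    finally show ?thesis .
  qed
qed

lemma sets_K: "sets (kernel P s) = sets state_space"
proof -
  obtain l v where s: "s = (l, v)" by (cases s)
  show ?thesis
  proof (cases "l \<in> {loc_t P, loc_f P}")
    case True
    then show ?thesis unfolding s kernel_def by auto
  next
    case False
    show ?thesis unfolding s kernel_nonterm[OF False] by (rule sets_bind) auto
  qed
qed

lemma meas_K: "measurable (kernel P s) N = measurable state_space N"
  by (rule measurable_cong_sets[OF sets_K refl])

lemma kpow_sum_le1:
  assumes A: "A \<in> sets state_space" and B: "B \<in> sets state_space" and d: "A \<inter> B = {}"
  shows "kpow (kernel P) n s A + kpow (kernel P) n s B \<le> 1"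
proof (induction n arbitrary: s)
  case 0
  then show ?case using d by (auto simp: indicator_def)
next
  case (Suc n)
  have "kpow (kernel P) (Suc n) s A + kpow (kernel P) (Suc n) s B =
     (\<integral>\<^sup>+y. kpow (kernel P) n y A + kpow (kernel P) n y B \<partial>kernel P s)"
    unfolding kpow.simps by (rule nn_integral_add[symmetric]) (simp_all only: meas_K kpow_meas[OF A] kpow_meas[OF B])
  also have "\<dots> \<le> 1"
    using Suc kpow_meas[OF A] kpow_meas[OF B] by (intro kernel_le1) auto
  finally show ?case .
qed


lemma component_int:
  "integrable (sample_measure P) (\<lambda>u. u k) \<and> (\<integral>u. u k \<partial>sample_measure P) = dist_mean P k"
proof -
  have D: "distr (sample_measure P) (dist P k) (\<lambda>\<omega>. \<omega> k) = dist P k"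
    unfolding sample_measure_def using isP_parts(3) by (intro distr_PiM_component) auto
  have g: "(\<lambda>\<omega>. \<omega> k) \<in> measurable (sample_measure P) (dist P k)"
    unfolding sample_measure_def by (rule measurable_component_singleton) simp
  have f: "(\<lambda>x. x) \<in> borel_measurable (dist P k)"
    by (subst measurable_cong_sets[OF isP_parts(4)[of k] refl]) simp
  have "integrable (dist P k) (\<lambda>x. x)" by (rule isP_parts(5))
  then have I: "integrable (sample_measure P) (\<lambda>u. u k)"
    using integrable_distr_eq[OF g f] D by simp
  have "(\<integral>u. u k \<partial>sample_measure P) = (\<integral>x. x \<partial>dist P k)"
    using integral_distr[OF g f] D by simp
  then show ?thesis using I unfolding dist_mean_def by simp
qed

lemma affine_int:
  "integrable (sample_measure P) (\<lambda>u. dotp c (upd F v u) + d) \<and>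
   (\<integral>u. dotp c (upd F v u) + d \<partial>sample_measure P) = dotp c (upd F v (dist_mean P)) + d"
proof -
  interpret S: prob_space "sample_measure P" by (rule S_prob)
  define K where "K = (\<Sum>i\<in>UNIV. c i * ((\<Sum>j\<in>UNIV. Qm F i j * v j) + ev F i))"
  define w where "w = (\<lambda>k. \<Sum>i\<in>UNIV. c i * Rm F i k)"
  have e: "dotp c (upd F v u) + d = (K + d) + (\<Sum>k\<in>UNIV. w k * u k)" for u
    unfolding dotp_upd K_def w_def by simp
  have I: "integrable (sample_measure P) (\<lambda>u. \<Sum>k\<in>UNIV. w k * u k)"
  proof -
    have Ik: "integrable (sample_measure P) (\<lambda>u. w k * u k)" for k
      using conjunct1[OF component_int[of k]] by (rule integrable_mult_right)
    show ?thesis by (rule Bochner_Integration.integrable_sum) (rule Ik)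
  qed
  have "(\<integral>u. (K + d) + (\<Sum>k\<in>UNIV. w k * u k) \<partial>sample_measure P) = (K + d) + (\<Sum>k\<in>UNIV. w k * dist_mean P k)"
  proof -
    have "(\<integral>u. (K + d) + (\<Sum>k\<in>UNIV. w k * u k) \<partial>sample_measure P) = (K + d) + (\<integral>u. (\<Sum>k\<in>UNIV. w k * u k) \<partial>sample_measure P)"
      using I S.prob_space by (subst Bochner_Integration.integral_add) auto
    also have "(\<integral>u. (\<Sum>k\<in>UNIV. w k * u k) \<partial>sample_measure P) = (\<Sum>k\<in>UNIV. w k * (\<integral>u. u k \<partial>sample_measure P))"
      by (subst Bochner_Integration.integral_sum) (auto intro!: integrable_mult_right conjunct1[OF component_int])
    finally show ?thesis using component_int by simp
  qed
  then show ?thesis unfolding e using I by simp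
qed


context
  fixes I :: "'l \<Rightarrow> ('v \<Rightarrow> real) set" and a :: "'l \<Rightarrow> 'v \<Rightarrow> real" and b :: "'l \<Rightarrow> real" and M :: real
  assumes inv: "is_invariant P I"
    and af: "a (loc_f P) = (\<lambda>_. 0)" and bf: "b (loc_f P) = 0"
    and Mb: "\<forall>l. l \<notin> {loc_t P, loc_f P} \<longrightarrow> (\<forall>v\<in>I l. dotp (a l) v + b l \<le> M)"
begin

lemma theta_simp: "theta P a b (l, v) = (if l = loc_t P then 0 else if l = loc_f P then 1 else exp (dotp (a l) v + b l))"
  unfolding theta_def by simp

lemma theta_nonneg: "theta P a b s \<ge> 0"
  by (cases s) (simp add: theta_simp)

lemma reach_inv: "(l, v) \<in> reach P \<Longrightarrow> v \<in> I l"
  using inv unfolding is_invariant_def by blast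

lemma theta_bound: "s \<in> reach P \<Longrightarrow> theta P a b s \<le> max 1 (exp M)"
proof -
  assume r: "s \<in> reach P"
  obtain l v where s: "s = (l, v)" by (cases s)
  show ?thesis
  proof (cases "l \<in> {loc_t P, loc_f P}")
    case True
    then have "theta P a b s \<le> 1" unfolding s theta_simp by auto
    then show ?thesis by (rule order_trans) (rule max.cobounded1)
  next
    case False
    have r': "(l, v) \<in> reach P" using r s by simp
    have vI: "v \<in> I l" by (rule reach_inv[OF r'])
    have "dotp (a l) v + b l \<le> M" using Mb[rule_format, OF False vI] .
    then have "exp (dotp (a l) v + b l) \<le> exp M" by simp
    moreover have "theta P a b s = exp (dotp (a l) v + b l)" unfolding s theta_simp using False by simp
    ultimately have "theta P a b s \<le> exp M" by simp
    then show ?thesis by (rule order_trans) (rule max.cobounded2)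
  qed
qed

lemma theta_comp_meas: "(\<lambda>u. theta P a b (dst F, upd F v u)) \<in> borel_measurable (sample_measure P)"
proof -
  have "(\<lambda>u. exp (dotp (a (dst F)) (upd F v u) + b (dst F))) \<in> borel_measurable BV"
    by measurable
  then show ?thesis unfolding meas_S theta_simp by simp
qed

lemma AE_supp: "AE u in sample_measure P. u \<in> supp P"
proof -
  interpret S: prob_space "sample_measure P" by (rule S_prob)
  show ?thesis using isP_parts(6,7) by (subst S.AE_in_set_eq_1) (auto simp: S.emeasure_eq_measure)
qed

lemma theta_int:
  assumes r: "(l, v) \<in> reach P" and l: "l \<notin> {loc_t P, loc_f P}" and F: "F \<in> set (forks (enabled P l v))"
  shows "integrable (sample_measure P) (\<lambda>u. theta P a b (dst F, upd F v u))"
proof -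
  interpret S: prob_space "sample_measure P" by (rule S_prob)
  have "AE u in sample_measure P. norm (theta P a b (dst F, upd F v u)) \<le> max 1 (exp M)"
    using AE_supp
  proof eventually_elim
    case (elim u)
    then have "(dst F, upd F v u) \<in> reach P" using r l F by (intro reach.step) auto
    then show ?case using theta_bound theta_nonneg by simp
  qed
  then show ?thesis using theta_comp_meas by (intro S.integrable_const_bound) auto
qed

lemma jensen_int:
  assumes r: "(l, v) \<in> reach P" and l: "l \<notin> {loc_t P, loc_f P}" and F: "F \<in> set (forks (enabled P l v))"
    and d: "dst F \<noteq> loc_t P"
  shows "exp (dotp (a (dst F)) (upd F v (dist_mean P)) + b (dst F)) \<le> (\<integral>u. theta P a b (dst F, upd F v u) \<partial>sample_measure P)"
proof -
  interpret S: prob_space "sample_measure P" by (rule S_prob)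
  show ?thesis
  proof (cases "dst F = loc_f P")
    case True
    then show ?thesis using af bf S.prob_space isP_parts(1) by (simp add: theta_simp)
  next
    case False
    define G where "G = (\<lambda>u. dotp (a (dst F)) (upd F v u) + b (dst F))"
    define m where "m = dotp (a (dst F)) (upd F v (dist_mean P)) + b (dst F)"
    have GI: "integrable (sample_measure P) G" and Gm: "(\<integral>u. G u \<partial>sample_measure P) = m"
      unfolding G_def m_def using affine_int by auto
    have th: "theta P a b (dst F, upd F v u) = exp (G u)" for u
      using d False unfolding G_def theta_simp by simp
    have EI: "integrable (sample_measure P) (\<lambda>u. exp (G u))"
      using theta_int[OF r l F] unfolding th .
    have "(\<integral>u. exp m * (1 + G u - m) \<partial>sample_measure P) \<le> (\<integral>u. exp (G u) \<partial>sample_measure P)"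
      using GI EI exp_tangent by (intro integral_mono) auto
    moreover have "(\<integral>u. exp m * (1 + G u - m) \<partial>sample_measure P) = exp m"
    proof -
      have "(\<lambda>u. exp m * (1 + G u - m)) = (\<lambda>u. exp m * ((1 - m) + G u))" by (simp add: fun_eq_iff)
      then have "(\<integral>u. exp m * (1 + G u - m) \<partial>sample_measure P) = exp m * (\<integral>u. (1 - m) + G u \<partial>sample_measure P)"
        by (simp only: integral_mult_right_zero)
      also have "(\<integral>u. (1 - m) + G u \<partial>sample_measure P) = (1 - m) + m"
        using GI Gm S.prob_space by (subst Bochner_Integration.integral_add) auto
      finally show ?thesis by simp
    qed
    ultimately show ?thesis unfolding th m_def by simp
  qed
qed


lemma pfp:
  assumes cond: "\<forall>\<tau>\<in>trans P.
          (let Fs = forks \<tau>;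
               J = {j. j < length Fs \<and> dst (Fs ! j) \<noteq> loc_t P};
               Q = (\<Sum>j\<in>J. fprob (Fs ! j))
           in Q > 0 \<and>
              (\<forall>v \<in> I (src \<tau>). v \<in> guard \<tau> \<longrightarrow>
                 (1 / Q) * (\<Sum>j\<in>J. fprob (Fs ! j) *
                    (dotp (a (dst (Fs ! j))) (upd (Fs ! j) v (dist_mean P)) + b (dst (Fs ! j))
                     - dotp (a (src \<tau>)) v - b (src \<tau>))) \<ge> - ln Q))"
    and r: "(l, v) \<in> reach P" and l: "l \<notin> {loc_t P, loc_f P}"
  shows "theta P a b (l, v) \<le> ptf P (theta P a b) (l, v)"
proof -
  define \<tau> where "\<tau> = enabled P l v"
  define Fs where "Fs = forks \<tau>"
  define J where "J = {j. j < length Fs \<and> dst (Fs ! j) \<noteq> loc_t P}"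
  define Q where "Q = (\<Sum>j\<in>J. fprob (Fs ! j))"
  define y where "y = (\<lambda>j. dotp (a (dst (Fs ! j))) (upd (Fs ! j) v (dist_mean P)) + b (dst (Fs ! j)))"
  define base where "base = dotp (a l) v + b l"
  define E where "E = (\<lambda>j. \<integral>u. theta P a b (dst (Fs ! j), upd (Fs ! j) v u) \<partial>sample_measure P)"
  have t: "\<tau> \<in> trans P" "src \<tau> = l" "v \<in> guard \<tau>" using enabled_props[OF l] unfolding \<tau>_def by auto
  have vI: "v \<in> I l" by (rule reach_inv[OF r])
  have c: "Q > 0 \<and> (\<forall>v \<in> I (src \<tau>). v \<in> guard \<tau> \<longrightarrow>
                 (1 / Q) * (\<Sum>j\<in>J. fprob (Fs ! j) *
                    (dotp (a (dst (Fs ! j))) (upd (Fs ! j) v (dist_mean P)) + b (dst (Fs ! j))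
                     - dotp (a (src \<tau>)) v - b (src \<tau>))) \<ge> - ln Q)"
    using cond t(1) unfolding Fs_def J_def Q_def Let_def by blast
  have Qp: "Q > 0" using c by blast
  have ineq: "(1 / Q) * (\<Sum>j\<in>J. fprob (Fs ! j) * (y j - base)) \<ge> - ln Q"
    using c vI t unfolding y_def base_def by (simp add: algebra_simps)
  have finJ: "finite J" unfolding J_def by simp
  have Jsub: "J \<subseteq> {..<length Fs}" unfolding J_def by auto
  have pp: "j < length Fs \<Longrightarrow> fprob (Fs ! j) > 0" for j using fork_nonneg[OF t(1)] unfolding Fs_def by simp
  have Fin: "j < length Fs \<Longrightarrow> Fs ! j \<in> set (forks (enabled P l v))" for j
    unfolding Fs_def \<tau>_def by simp
  have Enn: "E j \<ge> 0" for j unfolding E_def by (rule Bochner_Integration.integral_nonneg) (simp add: theta_nonneg)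
  have "ptf P (theta P a b) (l, v) = (\<Sum>F\<leftarrow>Fs. fprob F * (\<integral>u. theta P a b (dst F, upd F v u) \<partial>sample_measure P))"
    unfolding ptf_def Fs_def \<tau>_def using l by simp
  also have "\<dots> = (\<Sum>j<length Fs. fprob (Fs ! j) * E j)"
    unfolding E_def by (simp add: sum_list_sum_nth atLeast0LessThan)
  finally have ptf_eq: "ptf P (theta P a b) (l, v) = (\<Sum>j<length Fs. fprob (Fs ! j) * E j)" .
  have "(\<Sum>j\<in>J. fprob (Fs ! j) * E j) \<le> (\<Sum>j<length Fs. fprob (Fs ! j) * E j)"
  proof (rule sum_mono2)
    show "finite {..<length Fs}" by simp
    show "J \<subseteq> {..<length Fs}" by (rule Jsub)
    fix b assume "b \<in> {..<length Fs} - J"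
    then have "0 \<le> fprob (Fs ! b)" using pp[of b] by simp
    then show "0 \<le> fprob (Fs ! b) * E b" using Enn[of b] by (rule mult_nonneg_nonneg)
  qed
  moreover have "(\<Sum>j\<in>J. fprob (Fs ! j) * exp (y j)) \<le> (\<Sum>j\<in>J. fprob (Fs ! j) * E j)"
  proof (intro sum_mono mult_left_mono)
    fix j assume j: "j \<in> J"
    then have jl: "j < length Fs" and dj: "dst (Fs ! j) \<noteq> loc_t P" unfolding J_def by auto
    show "exp (y j) \<le> E j" unfolding y_def E_def by (rule jensen_int[OF r l Fin[OF jl] dj])
    show "0 \<le> fprob (Fs ! j)" using pp[OF jl] by simp
  qed
  moreover have "Q * exp ((1 / Q) * (\<Sum>j\<in>J. fprob (Fs ! j) * y j)) \<le> (\<Sum>j\<in>J. fprob (Fs ! j) * exp (y j))"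
    unfolding Q_def using finJ Qp pp Jsub unfolding Q_def
    by (intro fin_jensen) (auto intro: less_imp_le)
  moreover have "exp base \<le> Q * exp ((1 / Q) * (\<Sum>j\<in>J. fprob (Fs ! j) * y j))"
  proof -
    have "(\<Sum>j\<in>J. fprob (Fs ! j) * (y j - base)) = (\<Sum>j\<in>J. fprob (Fs ! j) * y j) - Q * base"
      unfolding Q_def by (simp add: algebra_simps sum_subtractf sum_distrib_left)
    then have "(1 / Q) * (\<Sum>j\<in>J. fprob (Fs ! j) * (y j - base)) = (1 / Q) * (\<Sum>j\<in>J. fprob (Fs ! j) * y j) - base"
      using Qp by (simp add: field_simps)
    then have "base - ln Q \<le> (1 / Q) * (\<Sum>j\<in>J. fprob (Fs ! j) * y j)" using ineq by simp
    then have "exp (base - ln Q) \<le> exp ((1 / Q) * (\<Sum>j\<in>J. fprob (Fs ! j) * y j))" by simp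
    moreover have "exp (base - ln Q) = exp base / Q" using Qp by (simp add: exp_diff)
    ultimately have "exp base / Q \<le> exp ((1 / Q) * (\<Sum>j\<in>J. fprob (Fs ! j) * y j))" by simp
    then show ?thesis using Qp by (simp add: field_simps)
  qed
  moreover have "theta P a b (l, v) = exp base" unfolding theta_simp base_def using l by simp
  ultimately show ?thesis unfolding ptf_eq by linarith
qed


lemma times_UNIV_sets: "A \<times> UNIV \<in> sets (state_space :: ('l \<times> ('v \<Rightarrow> real)) measure)"
proof -
  have "UNIV \<in> sets (BV :: ('v \<Rightarrow> real) measure)" using sets.top[of "BV :: ('v \<Rightarrow> real) measure"] by simp
  then show ?thesis unfolding state_space_def by (intro pair_measureI) auto
qed

lemma kpow_le1: "kpow (kernel P) n s (A \<times> UNIV) \<le> 1"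
  using kpow_sum_le1[OF times_UNIV_sets[of A] sets.empty_sets[of state_space] Int_empty_right, of n s]
  by (rule order_trans[OF add_increasing2[OF zero_le order_refl]])

context
  assumes cond: "\<forall>\<tau>\<in>trans P.
          (let Fs = forks \<tau>;
               J = {j. j < length Fs \<and> dst (Fs ! j) \<noteq> loc_t P};
               Q = (\<Sum>j\<in>J. fprob (Fs ! j))
           in Q > 0 \<and>
              (\<forall>v \<in> I (src \<tau>). v \<in> guard \<tau> \<longrightarrow>
                 (1 / Q) * (\<Sum>j\<in>J. fprob (Fs ! j) *
                    (dotp (a (dst (Fs ! j))) (upd (Fs ! j) v (dist_mean P)) + b (dst (Fs ! j))
                     - dotp (a (src \<tau>)) v - b (src \<tau>))) \<ge> - ln Q))"
begin

lemma MI: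
  "s \<in> reach P \<Longrightarrow> ennreal (theta P a b s) \<le>
     kpow (kernel P) n s ({loc_f P} \<times> UNIV) + ennreal (max 1 (exp M)) * kpow (kernel P) n s ((- {loc_t P, loc_f P}) \<times> UNIV)"
proof (induction n arbitrary: s)
  case 0
  obtain l v where s: "s = (l, v)" by (cases s)
  show ?case
  proof (cases "l \<in> {loc_t P, loc_f P}")
    case True
    then show ?thesis unfolding s theta_simp using isP_parts(1) by (auto simp: indicator_def)
  next
    case False
    have "theta P a b s \<le> max 1 (exp M)" by (rule theta_bound[OF 0])
    then show ?thesis unfolding s using False by (simp add: indicator_def)
  qed
next
  case (Suc n)
  define C where "C = ennreal (max 1 (exp M))"
  define h where "h = (\<lambda>s. kpow (kernel P) n s ({loc_f P} \<times> UNIV) + C * kpow (kernel P) n s ((- {loc_t P, loc_f P}) \<times> UNIV))"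
  have hm: "h \<in> borel_measurable state_space"
    unfolding h_def by (intro borel_measurable_add borel_measurable_times_ennreal borel_measurable_const kpow_meas[OF times_UNIV_sets])
  have IH: "s' \<in> reach P \<Longrightarrow> ennreal (theta P a b s') \<le> h s'" for s'
    using Suc.IH unfolding h_def C_def by blast
  have eq: "kpow (kernel P) (Suc n) s ({loc_f P} \<times> UNIV) + C * kpow (kernel P) (Suc n) s ((- {loc_t P, loc_f P}) \<times> UNIV)
      = (\<integral>\<^sup>+y. h y \<partial>kernel P s)"
  proof -
    have k1: "(\<lambda>y. kpow (kernel P) n y ({loc_f P} \<times> UNIV)) \<in> borel_measurable (kernel P s)"
      unfolding meas_K by (rule kpow_meas[OF times_UNIV_sets])
    have k2: "(\<lambda>y. kpow (kernel P) n y ((- {loc_t P, loc_f P}) \<times> UNIV)) \<in> borel_measurable (kernel P s)"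
      unfolding meas_K by (rule kpow_meas[OF times_UNIV_sets])
    have k3: "(\<lambda>y. C * kpow (kernel P) n y ((- {loc_t P, loc_f P}) \<times> UNIV)) \<in> borel_measurable (kernel P s)"
      by (intro borel_measurable_times_ennreal borel_measurable_const k2)
    show ?thesis unfolding kpow.simps h_def
      by (subst nn_integral_add[OF k1 k3]) (simp add: nn_integral_cmult[OF k2])
  qed
  obtain l v where s: "s = (l, v)" by (cases s)
  have "ennreal (theta P a b s) \<le> (\<integral>\<^sup>+y. h y \<partial>kernel P s)"
  proof (cases "l \<in> {loc_t P, loc_f P}")
    case True
    then have "(\<integral>\<^sup>+y. h y \<partial>kernel P s) = h s"
      unfolding kernel_def s using hm by (auto intro!: nn_integral_return)
    then show ?thesis using IH[OF Suc.prems] by simp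
  next
    case False
    interpret S: prob_space "sample_measure P" by (rule S_prob)
    let ?Fs = "forks (enabled P l v)"
    have t: "enabled P l v \<in> trans P" using enabled_props[OF False] by auto
    have r: "(l, v) \<in> reach P" using Suc.prems s by simp
    define E where "E = (\<lambda>j. \<integral>u. theta P a b (dst (?Fs ! j), upd (?Fs ! j) v u) \<partial>sample_measure P)"
    have Ej: "ennreal (E j) \<le> (\<integral>\<^sup>+u. h (dst (?Fs ! j), upd (?Fs ! j) v u) \<partial>sample_measure P)" if j: "j < length ?Fs" for j
    proof -
      have Fin: "?Fs ! j \<in> set ?Fs" using j by simp
      have "ennreal (E j) = (\<integral>\<^sup>+u. ennreal (theta P a b (dst (?Fs ! j), upd (?Fs ! j) v u)) \<partial>sample_measure P)"
        unfolding E_def using theta_int[OF r False Fin] theta_nonneg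
        by (subst nn_integral_eq_integral) auto
      also have "\<dots> \<le> (\<integral>\<^sup>+u. h (dst (?Fs ! j), upd (?Fs ! j) v u) \<partial>sample_measure P)"
        using AE_supp
      proof (intro nn_integral_mono_AE, eventually_elim)
        case (elim u)
        then have "(dst (?Fs ! j), upd (?Fs ! j) v u) \<in> reach P" using r False Fin by (intro reach.step) auto
        then show ?case by (rule IH)
      qed
      finally show ?thesis .
    qed
    have pn: "j < length ?Fs \<Longrightarrow> fprob (?Fs ! j) \<ge> 0" for j using fork_nonneg[OF t] by (simp add: less_imp_le)
    have En: "E j \<ge> 0" for j unfolding E_def by (rule Bochner_Integration.integral_nonneg) (simp add: theta_nonneg)
    have "theta P a b s \<le> ptf P (theta P a b) s" unfolding s by (rule pfp[OF cond r False])
    also have "ptf P (theta P a b) s = (\<Sum>j<length ?Fs. fprob (?Fs ! j) * E j)"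
      unfolding ptf_def s E_def using False by (simp add: sum_list_sum_nth atLeast0LessThan)
    finally have "ennreal (theta P a b s) \<le> ennreal (\<Sum>j<length ?Fs. fprob (?Fs ! j) * E j)"
      by (rule ennreal_leI)
    also have "\<dots> = (\<Sum>j<length ?Fs. ennreal (fprob (?Fs ! j)) * ennreal (E j))"
      using pn En by (subst sum_ennreal[symmetric]) (auto simp: ennreal_mult)
    also have "\<dots> \<le> (\<Sum>j<length ?Fs. ennreal (fprob (?Fs ! j)) * (\<integral>\<^sup>+u. h (dst (?Fs ! j), upd (?Fs ! j) v u) \<partial>sample_measure P))"
      using Ej by (intro sum_mono mult_left_mono) auto
    also have "\<dots> = (\<integral>\<^sup>+y. h y \<partial>kernel P s)"
      unfolding s by (rule kernel_integral[OF False hm, symmetric])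
    finally show ?thesis .
  qed
  then show ?case unfolding eq[symmetric] C_def .
qed


lemma final_bound:
  assumes init: "loc_init P \<notin> {loc_t P, loc_f P}" and tm: "terminates_as P (loc_init P, val_init P)"
  shows "ennreal (exp (dotp (a (loc_init P)) (val_init P) + b (loc_init P))) \<le> vpf P (loc_init P, val_init P)"
proof -
  define s0 where "s0 = (loc_init P, val_init P)"
  define C where "C = max 1 (exp M)"
  define kF where "kF = (\<lambda>n. kpow (kernel P) n s0 ({loc_f P} \<times> UNIV))"
  define kN where "kN = (\<lambda>n. kpow (kernel P) n s0 ((- {loc_t P, loc_f P}) \<times> UNIV))"
  define kT where "kT = (\<lambda>n. kpow (kernel P) n s0 ({loc_t P, loc_f P} \<times> UNIV))"
  have Cp: "C > 0" unfolding C_def by simp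
  have th: "theta P a b s0 = exp (dotp (a (loc_init P)) (val_init P) + b (loc_init P))"
    unfolding s0_def theta_simp using init by simp
  have r0: "s0 \<in> reach P" unfolding s0_def by (rule reach.init)
  have mi: "ennreal (theta P a b s0) \<le> kF n + ennreal C * kN n" for n
    unfolding kF_def kN_def C_def by (rule MI[OF r0])
  have vpf_eq: "vpf P s0 = (SUP n. kF n)" unfolding vpf_def kF_def ..
  have kFv: "kF n \<le> vpf P s0" for n unfolding vpf_eq by (rule SUP_upper) simp
  have vpf_fin: "vpf P s0 < top"
  proof -
    have "vpf P s0 \<le> 1" unfolding vpf_eq kF_def by (rule SUP_least) (rule kpow_le1)
    then show ?thesis using order.strict_trans1 by fastforce
  qed
  have NT: "kN n + kT n \<le> 1" for n
    unfolding kN_def kT_def by (rule kpow_sum_le1[OF times_UNIV_sets times_UNIV_sets]) auto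
  have T1: "(SUP n. kT n) = 1" using tm unfolding terminates_as_def kT_def s0_def .
  have "ennreal (theta P a b s0) \<le> vpf P s0"
  proof (rule ennreal_le_epsilon)
    fix e :: real assume e: "0 < e"
    define d where "d = min (1/2) (e / C)"
    have dp: "d > 0" unfolding d_def using e Cp by simp
    have d1: "d < 1" unfolding d_def by simp
    have dC: "C * d \<le> e" unfolding d_def using Cp by (simp add: min_def field_simps)
    have "ennreal (1 - d) < (SUP n. kT n)" unfolding T1 using dp d1 by (simp add: ennreal_lessI)
    then obtain n where n: "ennreal (1 - d) < kT n" by (auto simp: less_SUP_iff)
    have kNd: "kN n \<le> ennreal d"
    proof -
      have kNf: "kN n \<le> 1" using NT[of n] by (rule order_trans[OF add_increasing2[OF zero_le order_refl]])
      then obtain x where x: "kN n = ennreal x" "x \<ge> 0"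
        by (cases "kN n") (auto simp: top_unique)
      have "ennreal x + ennreal (1 - d) \<le> 1" using NT[of n] n x
        by (metis add_left_mono less_imp_le order_trans)
      then have "ennreal (x + (1 - d)) \<le> 1" using x d1 by (simp add: ennreal_plus)
      then have "x + (1 - d) \<le> 1" by (simp add: ennreal_le_1)
      then show ?thesis using x by simp
    qed
    have "ennreal (theta P a b s0) \<le> kF n + ennreal C * kN n" by (rule mi)
    also have "\<dots> \<le> vpf P s0 + ennreal C * ennreal d"
      using kFv kNd by (intro add_mono mult_left_mono) auto
    also have "ennreal C * ennreal d = ennreal (C * d)" using Cp dp by (intro ennreal_mult[symmetric]) auto
    also have "ennreal (C * d) \<le> ennreal e" using dC by (rule ennreal_leI)
    finally show "ennreal (theta P a b s0) \<le> vpf P s0 + ennreal e" by simp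
  qed
  then show ?thesis unfolding th by (simp add: s0_def)
qed

end

end

end

theorem mainTheorem12:
  fixes P :: "('l::finite, 'v::finite, 'r::finite) pts"
    and I :: "'l \<Rightarrow> ('v \<Rightarrow> real) set"
    and a :: "'l \<Rightarrow> 'v \<Rightarrow> real" and b :: "'l \<Rightarrow> real"
  assumes "affine_pts P"
    and "affine_invariant P I"
    and "loc_init P \<notin> {loc_t P, loc_f P}"
    and "terminates_as P (loc_init P, val_init P)"
    and "a (loc_f P) = (\<lambda>_. 0)" and "b (loc_f P) = 0"
    and "\<exists>M. \<forall>l. l \<notin> {loc_t P, loc_f P} \<longrightarrow> (\<forall>v\<in>I l. dotp (a l) v + b l \<le> M)"
    and "\<forall>\<tau>\<in>trans P.
          (let Fs = forks \<tau>;
               J = {j. j < length Fs \<and> dst (Fs ! j) \<noteq> loc_t P};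
               Q = (\<Sum>j\<in>J. fprob (Fs ! j))
           in Q > 0 \<and>
              (\<forall>v \<in> I (src \<tau>). v \<in> guard \<tau> \<longrightarrow>
                 (1 / Q) * (\<Sum>j\<in>J. fprob (Fs ! j) *
                    (dotp (a (dst (Fs ! j))) (upd (Fs ! j) v (dist_mean P)) + b (dst (Fs ! j))
                     - dotp (a (src \<tau>)) v - b (src \<tau>))) \<ge> - ln Q))"
  shows "(\<exists>B. \<forall>\<sigma>\<in>reach P. \<bar>theta P a b \<sigma>\<bar> \<le> B)
    \<and> post_fixed_point_on_reach P (theta P a b)
    \<and> ennreal (exp (dotp (a (loc_init P)) (val_init P) + b (loc_init P)))
        \<le> vpf P (loc_init P, val_init P)"
proof -
  have affP: "affine_pts P" by (rule assms(1))
  have inv: "is_invariant P I" using assms(2) unfolding affine_invariant_def by simp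
  have af: "a (loc_f P) = (\<lambda>_. 0)" and bf: "b (loc_f P) = 0" by (rule assms(5), rule assms(6))
  obtain M where Mb: "\<forall>l. l \<notin> {loc_t P, loc_f P} \<longrightarrow> (\<forall>v\<in>I l. dotp (a l) v + b l \<le> M)"
    using assms(7) by blast
  have cond: "\<forall>\<tau>\<in>trans P.
          (let Fs = forks \<tau>;
               J = {j. j < length Fs \<and> dst (Fs ! j) \<noteq> loc_t P};
               Q = (\<Sum>j\<in>J. fprob (Fs ! j))
           in Q > 0 \<and>
              (\<forall>v \<in> I (src \<tau>). v \<in> guard \<tau> \<longrightarrow>
                 (1 / Q) * (\<Sum>j\<in>J. fprob (Fs ! j) *
                    (dotp (a (dst (Fs ! j))) (upd (Fs ! j) v (dist_mean P)) + b (dst (Fs ! j))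
                     - dotp (a (src \<tau>)) v - b (src \<tau>))) \<ge> - ln Q))" by (rule assms(8))
  have tf: "loc_t P \<noteq> loc_f P" using isP_parts(1)[OF affP] .
  have B: "\<exists>B. \<forall>\<sigma>\<in>reach P. \<bar>theta P a b \<sigma>\<bar> \<le> B"
  proof (intro exI ballI)
    fix \<sigma> assume "\<sigma> \<in> reach P"
    then show "\<bar>theta P a b \<sigma>\<bar> \<le> max 1 (exp M)"
      using theta_bound[OF affP inv af bf Mb] theta_nonneg[OF affP inv af bf Mb, of \<sigma>] by simp
  qed
  have PF: "post_fixed_point_on_reach P (theta P a b)"
    unfolding post_fixed_point_on_reach_def
  proof (intro conjI allI ballI)
    fix v show "theta P a b (loc_t P, v) = 0" unfolding theta_def by simp
  next
    fix v show "theta P a b (loc_f P, v) = 1" unfolding theta_def using tf by simp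
  next
    fix \<sigma> assume r: "\<sigma> \<in> reach P"
    obtain l v where s: "\<sigma> = (l, v)" by (cases \<sigma>)
    show "theta P a b \<sigma> \<le> ptf P (theta P a b) \<sigma>"
    proof (cases "l \<in> {loc_t P, loc_f P}")
      case True
      then show ?thesis unfolding s theta_def ptf_def using tf by auto
    next
      case False
      show ?thesis unfolding s by (rule pfp[OF affP inv af bf Mb cond r[unfolded s] False])
    qed
  qed
  have F: "ennreal (exp (dotp (a (loc_init P)) (val_init P) + b (loc_init P)))
        \<le> vpf P (loc_init P, val_init P)"
    by (rule final_bound[OF affP inv af bf Mb cond assms(3) assms(4)])
  show ?thesis using B PF F by blast
qed

end
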